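(* Let $\Omega=[0,1)$, $\mathcal F$ its Borel $\sigma$-field, $\mathbb P$ Lebesgue measure. For $n\ge 2$ let $B_n:=\bigcup_{k=0}^{2^{n-2}-1}\left[\frac{2k}{2^n},\frac{2k+1}{2^n}\right)$ and let $\mathcal B_n=\sigma(\{B_n\}\cup\mathcal N)$; let $\mathcal B_0=\sigma(\mathcal N)$ (the trivial $\sigma$-subfield). Let $x=(\sqrt6-1)/8$ and $A:=\left[\tfrac{3}{16},\tfrac{7}{16}\right)\cup\left[1-x,1\right)$, $B:=\left[\tfrac{1}{16},\tfrac{5}{16}\right)\cup\left[1-2x+\tfrac1{16},1-x+\tfrac1{16}\right)$. Then: (i) $\mathcal B_n\to\mathcal B_0$ weakly, and $\mathcal B_0=\mathcal B_{\mathbb P}:=\{C\in\mathcal F:\lim_{n\to\infty}\inf_{D\in\mathcal B_n}\mathbb P(C\triangle D)=0\}$; (ii) for every $n\ge 4$, $A$ and $B$ are conditionally independent given $\mathcal B_n$, i.e. $\mathbb P$-a.s. $\mathbb P_{\mathcal B_n}\mathbb 1_{A\cap B}=\mathbb P_{\mathcal B_n}\mathbb 1_A\,\mathbb P_{\mathcal B_n}\mathbb 1_B$; (iii) $A$ and $B$ are not independent under $\mathbb P$ (hence not conditionally independent given $\mathcal B_0$). Consequently conditional independence is not preserved in the limit under weak convergence, even when the weak limit is taken to be $\mathcal B_{\mathbb P}$.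
   Context: $\mathcal N:=\{F\in\mathcal F:\mathbb P(F)=0\}$. For a $\sigma$-subfield $\mathcal A$ and integrable $f$, $\mathbb P_{\mathcal A}f:=\mathbb E^{\mathbb P}[f\mid\mathcal A]$. For $\mathbb P$-complete sub-$\sigma$-fields $(\mathcal B_n)_{n\in\mathbb N_0}$, $\mathcal B_n\to\mathcal B_0$ weakly if $\mathbb P_{\mathcal B_n}\mathbb 1_C\to\mathbb 1_C$ in $\mathbb P$-probability for every $C\in\mathcal B_0$. *)

theory Defs
  imports "HOL-Probability.Probability"
begin

definition PP :: "real measure" where
  "PP = restrict_space lborel {0..<1}"

text \<open>B_n = union over k = 0 .. 2^(n-2)-1 of [2k/2^n, (2k+1)/2^n) (meaningful for n >= 2).\<close>
definition Bset :: "nat \<Rightarrow> real set" where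
  "Bset n = (\<Union>k\<in>{0..<2^(n-2)}. {2 * real k / 2^n ..< (2 * real k + 1) / 2^n})"

definition Bfield :: "nat \<Rightarrow> real measure" where
  "Bfield n = sigma (space PP) (insert (Bset n) (null_sets PP))"

definition B0field :: "real measure" where
  "B0field = sigma (space PP) (null_sets PP)"

definition conv_in_prob :: "'a measure \<Rightarrow> (nat \<Rightarrow> 'a \<Rightarrow> real) \<Rightarrow> ('a \<Rightarrow> real) \<Rightarrow> bool" where
  "conv_in_prob M f g \<longleftrightarrow>
     (\<forall>e>0. (\<lambda>n. measure M {x \<in> space M. e < \<bar>f n x - g x\<bar>}) \<longlonglongrightarrow> 0)"

definition weak_conv :: "'a measure \<Rightarrow> (nat \<Rightarrow> 'a measure) \<Rightarrow> 'a measure \<Rightarrow> bool" where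
  "weak_conv M Bs B0 \<longleftrightarrow>
     (\<forall>C\<in>sets B0. conv_in_prob M (\<lambda>n. real_cond_exp M (Bs n) (indicator C)) (indicator C))"

definition BP_field :: "'a measure \<Rightarrow> (nat \<Rightarrow> 'a measure) \<Rightarrow> 'a set set" where
  "BP_field M Bs = {C \<in> sets M.
     (\<lambda>n. INF D\<in>sets (Bs n). measure M ((C - D) \<union> (D - C))) \<longlonglongrightarrow> 0}"

definition xx :: real where "xx = (sqrt 6 - 1) / 8"

definition Aset :: "real set" where
  "Aset = {3/16 ..< 7/16} \<union> {1 - xx ..< 1}"

definition Bset' :: "real set" where
  "Bset' = {1/16 ..< 5/16} \<union> {1 - 2*xx + 1/16 ..< 1 - xx + 1/16}"

end

theory Submission
  imports Defs
begin

context prob_space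
begin

lemma gen_pow: "G \<in> sets M \<Longrightarrow> insert G (null_sets M) \<subseteq> Pow (space M)"
  using sets.sets_into_space by (auto dest: null_setsD2)

lemma sig_char:
  assumes G: "G \<in> sets M" and D: "D \<in> sigma_sets (space M) (insert G (null_sets M))"
  shows "D \<in> sets M \<and> (\<exists>a b. AE x in M. (x \<in> D) = (a \<and> x \<in> G \<or> b \<and> x \<notin> G))"
  using D
proof induction
  case (Basic a)
  then show ?case
  proof
    assume "a = G" then show ?thesis using G by (intro conjI exI[of _ True] exI[of _ False]) auto
  next
    assume "a \<in> null_sets M"
    then show ?thesis by (intro conjI exI[of _ False] exI[of _ False]) (auto dest: null_setsD2 intro: AE_not_in)
  qed
next
  case Empty
  then show ?case by (intro conjI exI[of _ False] exI[of _ False]) auto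
next
  case (Compl a)
  then obtain p q where pq: "AE x in M. (x \<in> a) = (p \<and> x \<in> G \<or> q \<and> x \<notin> G)" by blast
  have "AE x in M. (x \<in> space M - a) = ((\<not>p) \<and> x \<in> G \<or> (\<not>q) \<and> x \<notin> G)"
    using pq AE_space by eventually_elim auto
  then show ?case using Compl by blast
next
  case (Union A)
  then have "\<forall>i. \<exists>p q. AE x in M. (x \<in> A i) = (p \<and> x \<in> G \<or> q \<and> x \<notin> G)" by blast
  then obtain p q where pq: "\<And>i. AE x in M. (x \<in> A i) = (p i \<and> x \<in> G \<or> q i \<and> x \<notin> G)" by metis
  have "AE x in M. \<forall>i. (x \<in> A i) = (p i \<and> x \<in> G \<or> q i \<and> x \<notin> G)"
    using pq by (simp add: AE_all_countable)
  then have "AE x in M. (x \<in> (\<Union>i. A i)) = ((\<exists>i. p i) \<and> x \<in> G \<or> (\<exists>i. q i) \<and> x \<notin> G)"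
    by eventually_elim auto
  moreover have "(\<Union>i. A i) \<in> sets M" using Union by auto
  ultimately show ?case by blast
qed

lemma sig_sets:
  "G \<in> sets M \<Longrightarrow> sets (sigma (space M) (insert G (null_sets M))) = sigma_sets (space M) (insert G (null_sets M))"
  by (rule sets_measure_of[OF gen_pow])

lemma sig_subalg:
  assumes "G \<in> sets M"
  shows "subalgebra M (sigma (space M) (insert G (null_sets M)))"
  unfolding subalgebra_def
proof
  show "space (sigma (space M) (insert G (null_sets M))) = space M"
    by (rule space_measure_of[OF gen_pow[OF assms]])
  show "sets (sigma (space M) (insert G (null_sets M))) \<subseteq> sets M"
    using sig_char[OF assms] sig_sets[OF assms] by auto
qed

lemma sig_sfs:
  assumes "G \<in> sets M"
  shows "sigma_finite_subalgebra M (sigma (space M) (insert G (null_sets M)))"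
  apply (rule finite_measure_subalgebra_is_sigma_finite)
  unfolding finite_measure_subalgebra_def finite_measure_subalgebra_axioms_def
  using sig_subalg[OF assms] finite_measure_axioms by auto


lemma set_int_split:
  fixes h :: "'a \<Rightarrow> real"
  assumes G: "G \<in> sets M" and h: "integrable M h"
    and ae: "AE x in M. (x \<in> A) = (a \<and> x \<in> G \<or> b \<and> x \<notin> G)" and A: "A \<in> sets M"
  shows "(\<integral>x. indicator A x * h x \<partial>M) =
     (if a then 1 else 0) * (\<integral>x. indicator G x * h x \<partial>M) + (if b then 1 else 0) * (\<integral>x. indicator (space M - G) x * h x \<partial>M)"
proof -
  have m[measurable]: "h \<in> borel_measurable M" using h by auto
  have G2[measurable]: "space M - G \<in> sets M" using G by auto
  have [measurable]: "G \<in> sets M" "A \<in> sets M" using G A by auto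
  have "(\<integral>x. indicator A x * h x \<partial>M) = (\<integral>x. (if a then 1 else 0) * (indicator G x * h x) + (if b then 1 else 0) * (indicator (space M - G) x * h x) \<partial>M)"
  proof (rule integral_cong_AE)
    show "AE x in M. indicator A x * h x = (if a then 1 else 0) * (indicator G x * h x) + (if b then 1 else 0) * (indicator (space M - G) x * h x)"
      using ae AE_space by eventually_elim (auto simp: indicator_def)
  qed measurable
  also have "\<dots> = (if a then 1 else 0) * (\<integral>x. indicator G x * h x \<partial>M) + (if b then 1 else 0) * (\<integral>x. indicator (space M - G) x * h x \<partial>M)"
    using integrable_mult_indicator[OF G h] integrable_mult_indicator[OF G2 h] by simp
  finally show ?thesis .
qed

lemma cexp_const:
  fixes f :: "'a \<Rightarrow> real"
  assumes G: "G \<in> sets M" and f: "integrable M f" and ae: "AE x in M. f x = c"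
  shows "AE x in M. real_cond_exp M (sigma (space M) (insert G (null_sets M))) f x = c"
proof -
  let ?F = "sigma (space M) (insert G (null_sets M))"
  interpret S: sigma_finite_subalgebra M ?F by (rule sig_sfs[OF G])
  show ?thesis
  proof (rule S.real_cond_exp_charact)
    fix A assume "A \<in> sets ?F"
    then have A: "A \<in> sets M" using sig_subalg[OF G] unfolding subalgebra_def by auto
    have [measurable]: "f \<in> borel_measurable M" using f by auto
    show "(\<integral>x\<in>A. f x \<partial>M) = (\<integral>x\<in>A. c \<partial>M)"
      unfolding set_lebesgue_integral_def
      by (rule integral_cong_AE) (use ae A in \<open>auto elim!: eventually_mono\<close>)
  qed (use f in auto)
qed

lemma cexp_two:
  fixes f :: "'a \<Rightarrow> real"
  assumes G: "G \<in> sets M" and f: "integrable M f"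
  shows "AE x in M. real_cond_exp M (sigma (space M) (insert G (null_sets M))) f x =
     (if x \<in> G then (\<integral>x. indicator G x * f x \<partial>M) / measure M G
      else (\<integral>x. indicator (space M - G) x * f x \<partial>M) / measure M (space M - G))"
proof -
  let ?F = "sigma (space M) (insert G (null_sets M))"
  interpret S: sigma_finite_subalgebra M ?F by (rule sig_sfs[OF G])
  define c1 where "c1 = (\<integral>x. indicator G x * f x \<partial>M) / measure M G"
  define c2 where "c2 = (\<integral>x. indicator (space M - G) x * f x \<partial>M) / measure M (space M - G)"
  define g where "g = (\<lambda>x. if x \<in> G then c1 else c2)"
  have G2[measurable]: "space M - G \<in> sets M" using G by auto
  have [measurable]: "G \<in> sets M" using G by auto
  have GF[measurable]: "G \<in> sets ?F" using sig_sets[OF G] by auto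
  have gF: "g \<in> borel_measurable ?F" unfolding g_def by measurable
  have gM: "g \<in> borel_measurable M" unfolding g_def by measurable
  have gi: "integrable M g"
    by (rule integrable_const_bound[where B="\<bar>c1\<bar> + \<bar>c2\<bar>"]) (auto simp: g_def gM)
  have key: "c * measure M H = (\<integral>x. indicator H x * f x \<partial>M)"
    if H: "H \<in> sets M" and c: "c = (\<integral>x. indicator H x * f x \<partial>M) / measure M H" for H c
  proof (cases "measure M H = 0")
    case True
    then have "H \<in> null_sets M" using H by (simp add: emeasure_eq_measure null_setsI)
    then have "(\<integral>x. indicator H x * f x \<partial>M) = (\<integral>x. 0 \<partial>M)"
      using f H by (intro integral_cong_AE) (auto dest!: AE_not_in elim!: eventually_mono)
    then show ?thesis using True by simp
  qed (use c in simp)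
  have e1: "(\<integral>x. indicator G x * g x \<partial>M) = c1 * measure M G"
  proof -
    have "(\<lambda>x. indicator G x * g x) = (\<lambda>x. c1 * indicator G x)" by (auto simp: g_def indicator_def fun_eq_iff)
    then show ?thesis using G by (simp add: Int_absorb2 sets.sets_into_space)
  qed
  have e2: "(\<integral>x. indicator (space M - G) x * g x \<partial>M) = c2 * measure M (space M - G)"
  proof -
    have "(\<lambda>x. indicator (space M - G) x * g x) = (\<lambda>x. c2 * indicator (space M - G) x)" by (auto simp: g_def indicator_def fun_eq_iff)
    then show ?thesis by (simp add: Int_absorb2)
  qed
  have "AE x in M. real_cond_exp M ?F f x = g x"
  proof (rule S.real_cond_exp_charact)
    fix A assume AF: "A \<in> sets ?F"
    then have A: "A \<in> sets M" using sig_subalg[OF G] unfolding subalgebra_def by auto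
    have "A \<in> sigma_sets (space M) (insert G (null_sets M))" using AF sig_sets[OF G] by simp
    from sig_char[OF G this] obtain a b where ab: "AE x in M. (x \<in> A) = (a \<and> x \<in> G \<or> b \<and> x \<notin> G)"
      by blast
    show "(\<integral>x\<in>A. f x \<partial>M) = (\<integral>x\<in>A. g x \<partial>M)"
      unfolding set_lebesgue_integral_def real_scaleR_def
      using set_int_split[OF G f ab A] set_int_split[OF G gi ab A] e1 e2
        key[OF G c1_def] key[OF G2 c2_def] by simp
  qed (use f gi gF in auto)
  then show ?thesis unfolding g_def c1_def c2_def .
qed

end


lemma PP_space[simp]: "space PP = {0..<1}"
  unfolding PP_def by (simp add: space_restrict_space)

lemma PP_sets_iff: "A \<in> sets PP \<longleftrightarrow> A \<subseteq> {0..<1} \<and> A \<in> sets borel"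
  unfolding PP_def by (subst sets_restrict_space_iff) auto

lemma PP_measure: "A \<subseteq> {0..<1} \<Longrightarrow> measure PP A = measure lborel A"
  unfolding PP_def by (rule measure_restrict_space) auto

lemma prob_PP: "prob_space PP"
  unfolding PP_def by (rule prob_space_restrict_space) auto

interpretation P: prob_space PP by (rule prob_PP)

lemma PP_Ico: "0 \<le> a \<Longrightarrow> a \<le> b \<Longrightarrow> b \<le> 1 \<Longrightarrow> measure PP {a..<b} = b - a"
  by (subst PP_measure) (auto simp: measure_def)

lemma PP_Ico_sets: "0 \<le> a \<Longrightarrow> b \<le> 1 \<Longrightarrow> {a..<b} \<in> sets PP"
  by (auto simp: PP_sets_iff)

lemma Bset_sub: "Bset n \<subseteq> {0..<1}"
proof
  fix x assume "x \<in> Bset n"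
  then obtain k where k: "k < 2^(n-2)" "2 * real k / 2^n \<le> x" "x < (2 * real k + 1) / 2^n"
    unfolding Bset_def by auto
  have "2*k+1 \<le> (2::nat)^n"
  proof (cases "n \<ge> 2")
    case True
    then have "(2::nat)^n = 2^(n-2) * 4" by (metis le_add_diff_inverse2 power_add power2_eq_square numeral_Bit0 mult_2)
    then show ?thesis using k by simp
  next
    case False
    then have "n - 2 = 0" by simp
    then show ?thesis using k False by (cases n) auto
  qed
  then have "2*real k+1 \<le> 2^n" by (metis of_nat_le_iff of_nat_numeral of_nat_power of_nat_Suc of_nat_mult add.commute Suc_eq_plus1)
  then have h1: "(2 * real k + 1) / 2^n \<le> 1" by simp
  have h2: "0 \<le> 2 * real k / 2^n" by simp
  have "0 \<le> x" using k(2) h2 by linarith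
  moreover have "x < 1" using k(3) h1 by linarith
  ultimately show "x \<in> {0..<1}" by simp
qed

lemma Bset_borel: "Bset n \<in> sets borel"
  unfolding Bset_def by (intro sets.finite_UN) auto

lemma Bset_sets: "Bset n \<in> sets PP"
  using Bset_sub Bset_borel by (simp add: PP_sets_iff)



lemma pow_n1: "n \<ge> 2 \<Longrightarrow> (2::nat)^(n-1) = 2 * 2^(n-2)"
proof -
  assume n: "n \<ge> 2"
  obtain k where k: "n = k + 2" using n by (metis le_add_diff_inverse2)
  show ?thesis unfolding k by simp
qed
lemma pow_n: "n \<ge> 1 \<Longrightarrow> (2::nat)^n = 2 * 2^(n-1)"
proof -
  assume n: "n \<ge> 1"
  obtain k where k: "n = k + 1" using n by (metis le_add_diff_inverse2)
  show ?thesis unfolding k by simp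
qed
lemma pow4: "n \<ge> 2 \<Longrightarrow> (2::nat)^n = 4 * 2^(n-2)"
proof -
  assume n: "n \<ge> 2"
  obtain k where k: "n = k + 2" using n by (metis le_add_diff_inverse2)
  show ?thesis unfolding k by (simp add: power_add)
qed
lemma quarter: "n \<ge> 2 \<Longrightarrow> real ((2::nat)^(n-2)) / 2^n = 1/4"
proof -
  assume n: "n \<ge> 2"
  obtain k where k: "n = k + 2" using n by (metis le_add_diff_inverse2)
  show ?thesis unfolding k by (simp add: power_add)
qed
lemma divq: "n \<ge> 2 \<Longrightarrow> ((2::nat)^(n-1)+1) div 2 = 2^(n-2)"
proof -
  assume n: "n \<ge> 2"
  obtain k where k: "n = k + 2" using n by (metis le_add_diff_inverse2)
  show ?thesis unfolding k by simp
qed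

lemma slice_mem:
  assumes n: "n \<ge> 2" and x1: "real j / 2^n \<le> x" and x2: "x < (real j + 1) / 2^n"
  shows "x \<in> Bset n \<longleftrightarrow> even j \<and> j < 2^(n-1)"
proof
  assume "x \<in> Bset n"
  then obtain k where k: "k < 2^(n-2)" "2 * real k / 2^n \<le> x" "x < (2 * real k + 1) / 2^n"
    unfolding Bset_def by auto
  have N: "(0::real) < 2^n" by simp
  have "real j \<le> 2^n * x" using x1 N by (simp add: pos_divide_le_eq mult.commute)
  moreover have "2^n * x < 2 * real k + 1" using k(3) N by (simp add: pos_less_divide_eq mult.commute)
  ultimately have "real j < real (2*k+1)" by simp
  then have j1: "j < 2*k+1" by (simp only: of_nat_less_iff)
  have "2 * real k \<le> 2^n * x" using k(2) N by (simp add: pos_divide_le_eq mult.commute)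
  moreover have "2^n * x < real j + 1" using x2 N by (simp add: pos_less_divide_eq mult.commute)
  ultimately have "real (2*k) < real (j+1)" by simp
  then have j2: "2*k < j+1" by (simp only: of_nat_less_iff)
  have "j = 2*k" using j1 j2 by simp
  then show "even j \<and> j < 2^(n-1)" using k(1) pow_n1[OF n] by simp
next
  assume "even j \<and> j < 2^(n-1)"
  then obtain k where k: "j = 2*k" "k < 2^(n-2)" using pow_n1[OF n] by (auto elim!: evenE)
  then show "x \<in> Bset n" unfolding Bset_def using x1 x2 by auto
qed

lemma slice_sub: "(real j + 1) / 2^n \<le> 1 \<Longrightarrow> {real j / 2^n ..< (real j + 1) / 2^n} \<subseteq> {0..<1}"
  by auto

lemma count_lemma:
  assumes n: "n \<ge> 2" and S: "S \<in> sets PP"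
    and hS: "\<And>j. even j \<Longrightarrow> j < 2^(n-1) \<Longrightarrow> measure PP (S \<inter> {real j / 2^n ..< (real j + 1) / 2^n}) = c"
  shows "j \<le> 2^(n-1) \<Longrightarrow> measure PP (S \<inter> Bset n \<inter> {0..< real j / 2^n}) = real ((j+1) div 2) * c"
proof (induction j)
  case 0
  then show ?case by simp
next
  case (Suc j)
  have jl: "j < 2^(n-1)" using Suc by simp
  have "j+1 \<le> (2::nat)^n" using Suc pow_n[of n] n by simp
  then have "real (j+1) \<le> real ((2::nat)^n)" by (simp only: of_nat_le_iff)
  then have "real j + 1 \<le> 2^n" by simp
  then have j1: "(real j + 1) / 2^n \<le> 1" by simp
  have "S \<inter> Bset n \<inter> {0..< real (Suc j) / 2^n} =
        (S \<inter> Bset n \<inter> {0..< real j / 2^n}) \<union> (S \<inter> Bset n \<inter> {real j / 2^n..< (real j + 1) / 2^n})"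
  proof -
    have o1: "0 \<le> real j / 2^n" "real j / 2^n \<le> (real j + 1) / 2^n" by (auto simp: divide_right_mono)
    have o2: "real (Suc j) / 2^n = (real j + 1) / 2^n" by simp
    show ?thesis unfolding o2 using o1 by (auto intro: order_trans[OF o1(1)])
  qed
  also have "S \<inter> Bset n \<inter> {real j / 2^n..< (real j + 1) / 2^n} =
      (if even j then S \<inter> {real j / 2^n..< (real j + 1) / 2^n} else {})"
    using slice_mem[OF n, of j] jl by auto
  finally have eq: "S \<inter> Bset n \<inter> {0..< real (Suc j) / 2^n} = (S \<inter> Bset n \<inter> {0..< real j / 2^n}) \<union>
      (if even j then S \<inter> {real j / 2^n..< (real j + 1) / 2^n} else {})" .
  have m1: "S \<inter> Bset n \<inter> {0..< real j / 2^n} \<in> sets PP" using S Bset_borel[of n] by (auto simp: PP_sets_iff)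
  have m2: "(if even j then S \<inter> {real j / 2^n..< (real j + 1) / 2^n} else {}) \<in> sets PP"
    using S PP_Ico_sets[of "real j / 2^n" "(real j + 1) / 2^n"] j1 by auto
  have "measure PP (S \<inter> Bset n \<inter> {0..< real (Suc j) / 2^n}) =
     measure PP (S \<inter> Bset n \<inter> {0..< real j / 2^n}) + measure PP (if even j then S \<inter> {real j / 2^n..< (real j + 1) / 2^n} else {})"
    unfolding eq by (rule P.finite_measure_Union[OF m1 m2]) auto
  also have "\<dots> = real ((j+1) div 2) * c + (if even j then c else 0)"
    using Suc jl hS[of j] by auto
  also have "\<dots> = real ((Suc j + 1) div 2) * c"
    by (cases "even j") (auto elim!: evenE simp: algebra_simps)
  finally show ?case .
qed



lemma jbound: "n \<ge> 2 \<Longrightarrow> j < 2^(n-1) \<Longrightarrow> (real j + 1) / 2^n \<le> (1::real)"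
proof -
  assume n: "n \<ge> 2" and j: "j < 2^(n-1)"
  have "j+1 \<le> (2::nat)^n" using j pow_n[of n] n by simp
  then have "real (j+1) \<le> real ((2::nat)^n)" by (simp only: of_nat_le_iff)
  then show ?thesis by simp
qed

lemma L_F:
  assumes n: "n \<ge> 2" and j: "j \<le> 2^(n-1)"
  shows "measure PP (Bset n \<inter> {0..<real j/2^n}) = real((j+1) div 2) / 2^n"
proof -
  have h: "measure PP ({0..<1} \<inter> {real j / 2^n ..< (real j + 1) / 2^n}) = 1/2^n"
    if "even j" "j < 2^(n-1)" for j
  proof -
    have b: "(real j + 1) / 2^n \<le> 1" using jbound[OF n that(2)] .
    have "{0..<1} \<inter> {real j / 2^n ..< (real j + 1) / 2^n} = {real j / 2^n ..< (real j + 1) / 2^n}"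
      using slice_sub[OF b] by blast
    moreover have "measure PP {real j / 2^n ..< (real j + 1) / 2^n} = (real j + 1) / 2^n - real j / 2^n"
      by (rule PP_Ico) (use b in \<open>auto simp: divide_right_mono\<close>)
    moreover have "(real j + 1) / 2^n - real j / 2^n = 1/2^n" by (simp add: field_simps)
    ultimately show ?thesis by simp
  qed
  have "measure PP ({0..<1} \<inter> Bset n \<inter> {0..<real j/2^n}) = real((j+1) div 2) * (1/2^n)"
    by (rule count_lemma[OF n _ h j]) (auto simp: PP_Ico_sets)
  moreover have "{0..<1} \<inter> Bset n = Bset n" using Bset_sub[of n] by blast
  ultimately show ?thesis by simp
qed

lemma L_int:
  assumes n: "n \<ge> 2" and ij: "i \<le> j" "j \<le> 2^(n-1)"
  shows "measure PP (Bset n \<inter> {real i/2^n..<real j/2^n}) = (real((j+1) div 2) - real((i+1) div 2)) / 2^n"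
proof -
  have o: "0 \<le> real i / 2^n" "real i / 2^n \<le> real j / 2^n" using ij by (auto simp: divide_right_mono)
  have eq: "Bset n \<inter> {0..<real j/2^n} = (Bset n \<inter> {0..<real i/2^n}) \<union> (Bset n \<inter> {real i/2^n..<real j/2^n})"
    using o Bset_sub[of n] by (auto intro: order_trans[OF o(1)])
  have "measure PP (Bset n \<inter> {0..<real j/2^n}) = measure PP (Bset n \<inter> {0..<real i/2^n}) + measure PP (Bset n \<inter> {real i/2^n..<real j/2^n})"
    unfolding eq by (rule P.finite_measure_Union) (use Bset_borel[of n] Bset_sub[of n] in \<open>auto simp: PP_sets_iff\<close>)
  then show ?thesis using L_F[OF n ij(2)] L_F[OF n order_trans[OF ij]] by (simp add: diff_divide_distrib)
qed

lemma half_eq: "n \<ge> 2 \<Longrightarrow> real ((2::nat)^(n-1)) / 2^n = (1/2::real)"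
proof -
  assume n: "n \<ge> 2"
  obtain k where k: "n = k + 2" using n by (metis le_add_diff_inverse2)
  show ?thesis unfolding k by simp
qed

lemma L_half: "n \<ge> 2 \<Longrightarrow> Bset n \<subseteq> {0..<1/2}"
proof
  fix x assume n: "n \<ge> 2" and "x \<in> Bset n"
  then obtain k where k: "k < 2^(n-2)" "2 * real k / 2^n \<le> x" "x < (2 * real k + 1) / 2^n"
    unfolding Bset_def by auto
  have "2*k+1 \<le> (2::nat)^(n-1)" using k pow_n1[OF n] by simp
  then have "real (2*k+1) \<le> real ((2::nat)^(n-1))" by (simp only: of_nat_le_iff)
  then have "(2 * real k + 1) / 2^n \<le> 2^(n-1) / 2^n" by (simp add: divide_right_mono)
  also have "(2::real)^(n-1) / 2^n = 1/2" using half_eq[OF n] by simp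
  finally have "x < 1/2" using k(3) by linarith
  moreover have "0 \<le> x" using k(2) by (smt (verit) divide_nonneg_nonneg of_nat_0_le_iff zero_le_power)
  ultimately show "x \<in> {0..<1/2}" by simp
qed

lemma L_B: "n \<ge> 2 \<Longrightarrow> measure PP (Bset n) = 1/4"
proof -
  assume n: "n \<ge> 2"
  have "Bset n = Bset n \<inter> {0..<real ((2::nat)^(n-1))/2^n}" using L_half[OF n] half_eq[OF n] by auto
  then have "measure PP (Bset n) = real(((2::nat)^(n-1)+1) div 2) / 2^n" using L_F[OF n, of "2^(n-1)"] by simp
  also have "\<dots> = 1/4" unfolding divq[OF n] quarter[OF n] ..
  finally show ?thesis .
qed



lemma L_BB:
  assumes n: "n \<ge> 2"
  shows "measure PP (Bset (Suc n) \<inter> Bset n) = 1/8"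
proof -
  have n1: "Suc n \<ge> 2" using n by simp
  have hS: "measure PP (Bset (Suc n) \<inter> {real j / 2^n ..< (real j + 1) / 2^n}) = 1/2^(Suc n)"
    if j: "even j" "j < 2^(n-1)" for j
  proof -
    define a where "a = real (2*j) / 2^(Suc n)"
    define b where "b = real (2*j+1) / 2^(Suc n)"
    define c where "c = (real (2*j+1) + 1) / 2^(Suc n)"
    have e1: "real j / 2^n = a" unfolding a_def by simp
    have e2: "(real j + 1) / 2^n = c" unfolding c_def by (simp add: field_simps)
    have e3: "(real (2*j) + 1) / 2^(Suc n) = b" unfolding b_def by simp
    have ab: "a \<le> b" unfolding a_def b_def by (rule divide_right_mono) auto
    have bc: "b \<le> c" unfolding c_def b_def by (rule divide_right_mono) auto
    have lt: "2*j < 2^(Suc n - 1)" using j pow_n[of n] n by simp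
    have "Bset (Suc n) \<inter> {a ..< c} = {a ..< b}"
    proof (rule set_eqI, rule iffI)
      fix x assume x: "x \<in> Bset (Suc n) \<inter> {a ..< c}"
      show "x \<in> {a ..< b}"
      proof (rule ccontr)
        assume "x \<notin> {a ..< b}"
        then have "b \<le> x" using x by auto
        then have "real (2*j+1) / 2^(Suc n) \<le> x" unfolding b_def .
        moreover have "x < (real (2*j+1) + 1) / 2^(Suc n)" using x unfolding c_def by auto
        ultimately have "x \<in> Bset (Suc n) \<longleftrightarrow> even (2*j+1) \<and> 2*j+1 < 2^(Suc n - 1)"
          by (rule slice_mem[OF n1])
        then show False using x by auto
      qed
    next
      fix x assume x: "x \<in> {a ..< b}"
      then have x1: "real (2*j) / 2^(Suc n) \<le> x" "x < (real (2*j) + 1) / 2^(Suc n)"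
        unfolding a_def e3[symmetric] by auto
      have "x \<in> Bset (Suc n) \<longleftrightarrow> even (2*j) \<and> 2*j < 2^(Suc n - 1)"
        by (rule slice_mem[OF n1 x1])
      then have "x \<in> Bset (Suc n)" using lt by simp
      moreover have "x < c" using x bc by auto
      ultimately show "x \<in> Bset (Suc n) \<inter> {a ..< c}" using x by auto
    qed
    moreover have "measure PP {a ..< b} = 1/2^(Suc n)"
    proof -
      have "b \<le> 1" unfolding b_def using jbound[OF n1 lt] by simp
      then have "measure PP {a ..< b} = b - a"
        by (intro PP_Ico ab) (auto simp: a_def)
      also have "\<dots> = 1/2^(Suc n)" unfolding a_def b_def by (simp add: field_simps)
      finally show ?thesis .
    qed
    ultimately show ?thesis unfolding e1 e2 by simp
  qed
  have "measure PP (Bset (Suc n) \<inter> Bset n \<inter> {0..< real ((2::nat)^(n-1)) / 2^n}) = real (((2::nat)^(n-1)+1) div 2) * (1/2^(Suc n))"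
    by (rule count_lemma[OF n Bset_sets hS]) auto
  moreover have "Bset (Suc n) \<inter> Bset n \<inter> {0..< real ((2::nat)^(n-1)) / 2^n} = Bset (Suc n) \<inter> Bset n"
    using L_half[OF n] half_eq[OF n] by auto
  moreover have "real (((2::nat)^(n-1)+1) div 2) * (1/2^(Suc n)) = (1/8::real)"
  proof -
    obtain k where k: "n = k + 2" using n by (metis le_add_diff_inverse2)
    have "real (((2::nat)^(n-1)+1) div 2) = 2^k" unfolding divq[OF n] k by simp
    moreover have "(2::real)^(Suc n) = 8 * 2^k" unfolding k by (simp add: power_add)
    ultimately show ?thesis by simp
  qed
  ultimately show ?thesis by simp
qed

lemma xx_bounds: "7/40 < xx" "xx < 3/16"
proof -
  have "12/5 < sqrt 6" by (rule real_less_rsqrt) (simp add: power2_eq_square)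
  moreover have "sqrt 6 < 5/2" by (rule real_less_lsqrt) (auto simp: power2_eq_square)
  ultimately show "7/40 < xx" "xx < 3/16" unfolding xx_def by auto
qed

lemma xx_sq: "(1/8 + xx)^2 = 3/32"
proof -
  have "1/8 + xx = sqrt 6 / 8" unfolding xx_def by (simp add: field_simps)
  then have "(1/8 + xx)^2 = (sqrt 6)^2 / 8^2" by (simp only: power_divide)
  also have "\<dots> = 3/32" by simp
  finally show ?thesis .
qed

lemma xx_ne: "(3/16::real) \<noteq> (1/4 + xx) * (1/4 + xx)"
proof
  assume "(3/16::real) = (1/4 + xx) * (1/4 + xx)"
  moreover have "(1/4+xx)*(1/4+xx) = (1/8+xx)^2 + (1/8+xx)/4 + 1/64" by (simp add: power2_eq_square field_simps)
  ultimately have "3/16 = 3/32 + (1/8+xx)/4 + (1/64::real)" using xx_sq by simp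
  then have "xx = 3/16" by (simp add: field_simps)
  then show False using xx_bounds by simp
qed



lemma sixteenth: "n \<ge> 4 \<Longrightarrow> real (c * 2^(n-4)) / 2^n = real c / (16::real)"
proof -
  assume n: "n \<ge> 4"
  obtain k where k: "n = k + 4" using n by (metis le_add_diff_inverse2)
  show ?thesis unfolding k by (simp add: power_add)
qed

lemma odd_half: "odd p \<Longrightarrow> real ((p+1) div 2) = (real p + 1) / 2"
  by (auto elim!: oddE)

lemma arith16:
  assumes n: "n \<ge> 4" and p: "odd p" and q: "odd q"
  shows "(real ((p*2^(n-4)+1) div 2) - real ((q*2^(n-4)+1) div 2)) / 2^n = (real p - real q) / 32"
proof (cases "n = 4")
  case True
  then show ?thesis using odd_half[OF p] odd_half[OF q] by (simp add: field_simps)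
next
  case False
  then have "n \<ge> 5" using n by simp
  then obtain k where k: "n = k + 5" by (metis le_add_diff_inverse2)
  have d: "(r * 2^(n-4) + 1) div 2 = r * 2^k" for r :: nat
  proof -
    have e: "r * 2^(n-4) + 1 = 2 * (r * 2^k) + 1" unfolding k by simp
    show ?thesis unfolding e by simp
  qed
  show ?thesis unfolding d unfolding k by (simp add: field_simps power_add)
qed

lemma Aset_half: "Aset \<inter> {0..<1/2} = {3/16..<7/16}"
  unfolding Aset_def using xx_bounds by auto

lemma Bset'_half: "Bset' \<inter> {0..<1/2} = {1/16..<5/16}"
  unfolding Bset'_def using xx_bounds by auto

lemma AB_eq: "Aset \<inter> Bset' = {3/16..<5/16} \<union> {1-xx..<1-xx+1/16}"
  unfolding Aset_def Bset'_def using xx_bounds by auto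

lemma Aset_sets: "Aset \<in> sets PP"
  unfolding Aset_def using xx_bounds by (auto simp: PP_sets_iff)

lemma Bset'_sets: "Bset' \<in> sets PP"
  unfolding Bset'_def using xx_bounds by (auto simp: PP_sets_iff)

lemma PA: "measure PP Aset = 1/4 + xx"
proof -
  have "measure PP Aset = measure PP {3/16..<7/16} + measure PP {1-xx..<1}"
    unfolding Aset_def by (rule P.finite_measure_Union) (use xx_bounds in \<open>auto simp: PP_sets_iff\<close>)
  also have "\<dots> = 1/4 + xx" using xx_bounds by (simp add: PP_Ico)
  finally show ?thesis .
qed

lemma PB: "measure PP Bset' = 1/4 + xx"
proof -
  have "measure PP Bset' = measure PP {1/16..<5/16} + measure PP {1-2*xx+1/16..<1-xx+1/16}"
    unfolding Bset'_def by (rule P.finite_measure_Union) (use xx_bounds in \<open>auto simp: PP_sets_iff\<close>)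
  also have "\<dots> = 1/4 + xx" using xx_bounds by (simp add: PP_Ico)
  finally show ?thesis .
qed

lemma PAB: "measure PP (Aset \<inter> Bset') = 3/16"
proof -
  have "measure PP (Aset \<inter> Bset') = measure PP {3/16..<5/16} + measure PP {1-xx..<1-xx+1/16}"
    unfolding AB_eq by (rule P.finite_measure_Union) (use xx_bounds in \<open>auto simp: PP_sets_iff\<close>)
  also have "\<dots> = 3/16" using xx_bounds by (simp add: PP_Ico)
  finally show ?thesis .
qed

lemma slice16:
  assumes n: "n \<ge> 4" and pq: "q \<le> p" "p \<le> 8" "odd p" "odd q"
  shows "measure PP (Bset n \<inter> {real q/16..<real p/16}) = (real p - real q) / 32"
proof -
  have n2: "n \<ge> 2" using n by simp
  have "p * 2^(n-4) \<le> 8 * 2^(n-4)" using pq by simp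
  also have "8 * 2^(n-4) = (2::nat)^(n-1)"
  proof -
    obtain k where k: "n = k + 4" using n by (metis le_add_diff_inverse2)
    show ?thesis unfolding k by (simp add: power_add)
  qed
  finally have pl: "p * 2^(n-4) \<le> (2::nat)^(n-1)" .
  have ql: "q * 2^(n-4) \<le> p * 2^(n-4)" using pq by simp
  have "measure PP (Bset n \<inter> {real (q*2^(n-4))/2^n..<real (p*2^(n-4))/2^n}) =
     (real ((p*2^(n-4)+1) div 2) - real ((q*2^(n-4)+1) div 2)) / 2^n"
    by (rule L_int[OF n2 ql pl])
  then show ?thesis unfolding sixteenth[OF n] arith16[OF n pq(3,4)] .
qed

lemma mA: "n \<ge> 4 \<Longrightarrow> measure PP (Aset \<inter> Bset n) = 1/8"
proof -
  assume n: "n \<ge> 4"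
  have "Aset \<inter> Bset n = (Aset \<inter> {0..<1/2}) \<inter> Bset n" using L_half[of n] n by auto
  then have "Aset \<inter> Bset n = Bset n \<inter> {real 3/16..<real 7/16}" unfolding Aset_half by auto
  moreover have "measure PP (Bset n \<inter> {real 3/16..<real 7/16}) = (real 7 - real 3) / 32"
    by (rule slice16[OF n]) auto
  ultimately show ?thesis by simp
qed

lemma mB: "n \<ge> 4 \<Longrightarrow> measure PP (Bset' \<inter> Bset n) = 1/8"
proof -
  assume n: "n \<ge> 4"
  have "Bset' \<inter> Bset n = (Bset' \<inter> {0..<1/2}) \<inter> Bset n" using L_half[of n] n by auto
  then have "Bset' \<inter> Bset n = Bset n \<inter> {real 1/16..<real 5/16}" unfolding Bset'_half by auto
  moreover have "measure PP (Bset n \<inter> {real 1/16..<real 5/16}) = (real 5 - real 1) / 32"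
    by (rule slice16[OF n]) auto
  ultimately show ?thesis by simp
qed

lemma mAB: "n \<ge> 4 \<Longrightarrow> measure PP (Aset \<inter> Bset' \<inter> Bset n) = 1/16"
proof -
  assume n: "n \<ge> 4"
  have "Aset \<inter> Bset' \<inter> Bset n = (Aset \<inter> {0..<1/2}) \<inter> (Bset' \<inter> {0..<1/2}) \<inter> Bset n" using L_half[of n] n by auto
  then have "Aset \<inter> Bset' \<inter> Bset n = Bset n \<inter> {real 3/16..<real 5/16}" unfolding Aset_half Bset'_half by auto
  moreover have "measure PP (Bset n \<inter> {real 3/16..<real 5/16}) = (real 5 - real 3) / 32"
    by (rule slice16[OF n]) auto
  ultimately show ?thesis by simp
qed



lemma int_ind2: "A \<in> sets PP \<Longrightarrow> B \<in> sets PP \<Longrightarrow> (\<integral>x. indicator A x * indicator B x \<partial>PP) = measure PP (A \<inter> B)"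
proof -
  assume A: "A \<in> sets PP" and B: "B \<in> sets PP"
  have "(\<lambda>x. indicator A x * indicator B x :: real) = indicator (A \<inter> B)"
    by (simp add: fun_eq_iff indicator_inter_arith)
  moreover have "A \<inter> B \<inter> space PP = A \<inter> B" using A sets.sets_into_space by blast
  ultimately show ?thesis by simp
qed

lemma cexp_ind:
  assumes G: "G \<in> sets PP" and S: "S \<in> sets PP"
  shows "AE x in PP. real_cond_exp PP (sigma (space PP) (insert G (null_sets PP))) (indicator S) x =
     (if x \<in> G then measure PP (G \<inter> S) / measure PP G
      else measure PP ((space PP - G) \<inter> S) / measure PP (space PP - G))"
proof -
  have i: "integrable PP (indicator S :: real \<Rightarrow> real)" by (rule integrable_real_indicator[OF S]) (simp add: P.emeasure_finite less_top[symmetric])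
  have G2: "space PP - G \<in> sets PP" by (rule sets.Diff[OF sets.top G])
  show ?thesis using prob_space.cexp_two[OF prob_PP G i] unfolding int_ind2[OF G S] int_ind2[OF G2 S] .
qed

lemma B0_eq: "B0field = sigma (space PP) (insert {} (null_sets PP))"
  unfolding B0field_def by (simp add: insert_absorb)

lemma part3:
  assumes n: "n \<ge> 4"
  shows "AE \<omega> in PP.
          real_cond_exp PP (Bfield n) (indicator (Aset \<inter> Bset')) \<omega>
        = real_cond_exp PP (Bfield n) (indicator Aset) \<omega> * real_cond_exp PP (Bfield n) (indicator Bset') \<omega>"
proof -
  have n2: "n \<ge> 2" using n by simp
  let ?G = "Bset n"
  have G: "?G \<in> sets PP" by (rule Bset_sets)
  have AB: "Aset \<inter> Bset' \<in> sets PP" using Aset_sets Bset'_sets by auto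
  have mG: "measure PP ?G = 1/4" by (rule L_B[OF n2])
  have mGc: "measure PP (space PP - ?G) = 3/4" using P.prob_compl[OF G] mG by simp
  have c: "(space PP - ?G) \<inter> S = S - (S \<inter> ?G)" if "S \<in> sets PP" for S
    using that sets.sets_into_space by blast
  have mc: "measure PP ((space PP - ?G) \<inter> S) = measure PP S - measure PP (S \<inter> ?G)" if "S \<in> sets PP" for S
    unfolding c[OF that] by (rule P.finite_measure_Diff) (use that G in auto)
  have v1: "measure PP (?G \<inter> (Aset \<inter> Bset')) = 1/16" using mAB[OF n] by (simp add: Int_ac)
  have v2: "measure PP (?G \<inter> Aset) = 1/8" using mA[OF n] by (simp add: Int_ac)
  have v3: "measure PP (?G \<inter> Bset') = 1/8" using mB[OF n] by (simp add: Int_ac)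
  have w1: "measure PP ((space PP - ?G) \<inter> (Aset \<inter> Bset')) = 3/16 - 1/16"
    using mc[OF AB] PAB mAB[OF n] by (simp add: Int_ac)
  have w2: "measure PP ((space PP - ?G) \<inter> Aset) = (1/4 + xx) - 1/8"
    using mc[OF Aset_sets] PA mA[OF n] by (simp add: Int_ac)
  have w3: "measure PP ((space PP - ?G) \<inter> Bset') = (1/4 + xx) - 1/8"
    using mc[OF Bset'_sets] PB mB[OF n] by (simp add: Int_ac)
  have num: "((1/4 + xx) - 1/8) / (3/4) * (((1/4 + xx) - 1/8) / (3/4)) = (3/16 - 1/16) / (3/4::real)"
  proof -
    have "((1/4 + xx) - 1/8) / (3/4) * (((1/4 + xx) - 1/8) / (3/4)) = (1/8 + xx)^2 * (16/9)"
      by (simp add: power2_eq_square field_simps)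
    then show ?thesis using xx_sq by simp
  qed
  have pt: "a = b * c"
    if "a = (if x \<in> ?G then measure PP (?G \<inter> (Aset \<inter> Bset')) / measure PP ?G
             else measure PP ((space PP - ?G) \<inter> (Aset \<inter> Bset')) / measure PP (space PP - ?G))"
       "b = (if x \<in> ?G then measure PP (?G \<inter> Aset) / measure PP ?G
             else measure PP ((space PP - ?G) \<inter> Aset) / measure PP (space PP - ?G))"
       "c = (if x \<in> ?G then measure PP (?G \<inter> Bset') / measure PP ?G
             else measure PP ((space PP - ?G) \<inter> Bset') / measure PP (space PP - ?G))"
    for a b c x
  proof (cases "x \<in> ?G")
    case True
    show ?thesis unfolding that by (simp only: if_P[OF True] v1 v2 v3 mG) simp
  next
    case False
    show ?thesis unfolding that by (simp only: if_not_P[OF False] w1 w2 w3 mGc) (rule num[symmetric])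
  qed
  show ?thesis
    using cexp_ind[OF G AB] cexp_ind[OF G Aset_sets] cexp_ind[OF G Bset'_sets]
    unfolding Bfield_def
    by eventually_elim (rule pt)
qed

lemma part4: "measure PP (Aset \<inter> Bset') \<noteq> measure PP Aset * measure PP Bset'"
  using xx_ne unfolding PAB PA PB .

lemma part5: "\<not> (AE \<omega> in PP.
          real_cond_exp PP B0field (indicator (Aset \<inter> Bset')) \<omega>
        = real_cond_exp PP B0field (indicator Aset) \<omega> * real_cond_exp PP B0field (indicator Bset') \<omega>)"
proof
  assume ae: "AE \<omega> in PP.
          real_cond_exp PP B0field (indicator (Aset \<inter> Bset')) \<omega>
        = real_cond_exp PP B0field (indicator Aset) \<omega> * real_cond_exp PP B0field (indicator Bset') \<omega>"
  have G: "{} \<in> sets PP" by simp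
  have AB: "Aset \<inter> Bset' \<in> sets PP" using Aset_sets Bset'_sets by auto
  have sp: "measure PP (space PP - {}) = 1" using P.prob_space by simp
  have e: "(space PP - {}) \<inter> S = S" if "S \<in> sets PP" for S using that sets.sets_into_space by blast
  have "AE \<omega> in PP. measure PP (Aset \<inter> Bset') = measure PP Aset * measure PP Bset'"
    using ae cexp_ind[OF G AB] cexp_ind[OF G Aset_sets] cexp_ind[OF G Bset'_sets]
    unfolding B0_eq[symmetric]
    by eventually_elim (simp only: sp e[OF AB] e[OF Aset_sets] e[OF Bset'_sets], simp)
  then have "measure PP (Aset \<inter> Bset') = measure PP Aset * measure PP Bset'" by simp
  then show False using part4 by simp
qed



lemma char_PP:
  assumes G: "G \<in> sets PP" and D: "D \<in> sets (sigma (space PP) (insert G (null_sets PP)))"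
  shows "D \<in> sets PP \<and> (\<exists>a b. AE x in PP. (x \<in> D) = (a \<and> x \<in> G \<or> b \<and> x \<notin> G))"
  using prob_space.sig_char[OF prob_PP G] D prob_space.sig_sets[OF prob_PP G] by simp

lemma meas0: "AE x in PP. \<not> Q x \<Longrightarrow> measure PP {x\<in>space PP. Q x} = 0"
proof -
  assume "AE x in PP. \<not> Q x"
  then obtain N where N: "{x\<in>space PP. \<not> \<not> Q x} \<subseteq> N" "emeasure PP N = 0" "N \<in> sets PP" by (rule AE_E)
  have "emeasure PP {x\<in>space PP. Q x} \<le> emeasure PP N" using N by (intro emeasure_mono) auto
  then have "emeasure PP {x\<in>space PP. Q x} = 0" using N by auto
  then show ?thesis by (simp add: measure_def)
qed

lemma sub2: "A \<in> sets PP \<Longrightarrow> B \<in> sets PP \<Longrightarrow> measure PP (A \<union> B) \<le> measure PP A + measure PP B"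
  by (rule measure_subadditive) (auto simp: P.emeasure_finite)

lemma part1: "weak_conv PP Bfield B0field"
  unfolding weak_conv_def conv_in_prob_def
proof (intro ballI allI impI)
  fix C and e :: real assume C: "C \<in> sets B0field" and e: "e > 0"
  have G: "{} \<in> sets PP" by simp
  from char_PP[OF G, of C] C obtain a b where Cs: "C \<in> sets PP" and ab: "AE x in PP. (x \<in> C) = (a \<and> x \<in> {} \<or> b \<and> x \<notin> {})"
    unfolding B0_eq by blast
  define c :: real where "c = (if b then 1 else 0)"
  have aeC: "AE x in PP. indicator C x = c" using ab by eventually_elim (auto simp: c_def)
  have i: "integrable PP (indicator C :: real \<Rightarrow> real)"
    by (rule integrable_real_indicator[OF Cs]) (simp add: P.emeasure_finite less_top[symmetric])
  have "measure PP {x \<in> space PP. e < \<bar>real_cond_exp PP (Bfield n) (indicator C) x - indicator C x\<bar>} = 0" for n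
  proof (rule meas0)
    have "AE x in PP. real_cond_exp PP (Bfield n) (indicator C) x = c"
      unfolding Bfield_def by (rule prob_space.cexp_const[OF prob_PP Bset_sets i aeC])
    then show "AE x in PP. \<not> e < \<bar>real_cond_exp PP (Bfield n) (indicator C) x - indicator C x\<bar>"
      using aeC by eventually_elim (use e in simp)
  qed
  then show "(\<lambda>n. measure PP {x \<in> space PP. e < \<bar>real_cond_exp PP (Bfield n) (indicator C) x - indicator C x\<bar>}) \<longlonglongrightarrow> 0"
    by simp
qed


lemma msplit:
  assumes G: "G \<in> sets PP" and T: "T \<in> sets PP" and D: "D \<in> sets PP"
    and ae: "AE x in PP. (x \<in> D) = (a \<and> x \<in> G \<or> b \<and> x \<notin> G)"
  shows "measure PP (D \<inter> T) = (if a then 1 else 0) * measure PP (G \<inter> T) + (if b then 1 else 0) * measure PP ((space PP - G) \<inter> T)"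
proof -
  have i: "integrable PP (indicator T :: real \<Rightarrow> real)"
    by (rule integrable_real_indicator[OF T]) (simp add: P.emeasure_finite less_top[symmetric])
  have G2: "space PP - G \<in> sets PP" by (rule sets.Diff[OF sets.top G])
  show ?thesis using prob_space.set_int_split[OF prob_PP G i ae D]
    unfolding int_ind2[OF D T] int_ind2[OF G T] int_ind2[OF G2 T] .
qed

lemma dtest:
  assumes X: "X \<in> sets PP" and Y: "Y \<in> sets PP" and T: "T \<in> sets PP"
  shows "\<bar>measure PP (X \<inter> T) - measure PP (Y \<inter> T)\<bar> \<le> measure PP ((X - Y) \<union> (Y - X))"
proof -
  have s: "(X - Y) \<union> (Y - X) \<in> sets PP" using X Y by auto
  have "measure PP (X \<inter> T) \<le> measure PP ((Y \<inter> T) \<union> ((X - Y) \<union> (Y - X)))"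
    by (rule P.finite_measure_mono) (use X Y T in auto)
  also have "\<dots> \<le> measure PP (Y \<inter> T) + measure PP ((X - Y) \<union> (Y - X))"
    by (rule sub2) (use Y T s in auto)
  finally have 1: "measure PP (X \<inter> T) \<le> measure PP (Y \<inter> T) + measure PP ((X - Y) \<union> (Y - X))" .
  have "measure PP (Y \<inter> T) \<le> measure PP ((X \<inter> T) \<union> ((X - Y) \<union> (Y - X)))"
    by (rule P.finite_measure_mono) (use X Y T in auto)
  also have "\<dots> \<le> measure PP (X \<inter> T) + measure PP ((X - Y) \<union> (Y - X))"
    by (rule sub2) (use X T s in auto)
  finally have 2: "measure PP (Y \<inter> T) \<le> measure PP (X \<inter> T) + measure PP ((X - Y) \<union> (Y - X))" .
  show ?thesis using 1 2 by linarith
qed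

lemma dtri:
  assumes X: "X \<in> sets PP" and Y: "Y \<in> sets PP" and Z: "Z \<in> sets PP"
  shows "measure PP ((X - Z) \<union> (Z - X)) \<le> measure PP ((X - Y) \<union> (Y - X)) + measure PP ((Y - Z) \<union> (Z - Y))"
proof -
  have "measure PP ((X - Z) \<union> (Z - X)) \<le> measure PP (((X - Y) \<union> (Y - X)) \<union> ((Y - Z) \<union> (Z - Y)))"
    by (rule P.finite_measure_mono) (use X Y Z in auto)
  also have "\<dots> \<le> measure PP ((X - Y) \<union> (Y - X)) + measure PP ((Y - Z) \<union> (Z - Y))"
    by (rule sub2) (use X Y Z in auto)
  finally show ?thesis .
qed

lemma key:
  assumes n: "n \<ge> 2" and C: "C \<in> sets PP" and eps: "\<epsilon> \<le> 1/16"
    and D1: "D1 \<in> sets (Bfield n)" and D2: "D2 \<in> sets (Bfield (Suc n))"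
    and d1: "measure PP ((C - D1) \<union> (D1 - C)) < \<epsilon>" and d2: "measure PP ((C - D2) \<union> (D2 - C)) < \<epsilon>"
  shows "measure PP C < \<epsilon> \<or> measure PP (space PP - C) < \<epsilon>"
proof -
  let ?G1 = "Bset n" and ?G2 = "Bset (Suc n)"
  have G1: "?G1 \<in> sets PP" and G2: "?G2 \<in> sets PP" by (rule Bset_sets)+
  obtain a1 b1 where D1s: "D1 \<in> sets PP" and ab1: "AE x in PP. (x \<in> D1) = (a1 \<and> x \<in> ?G1 \<or> b1 \<and> x \<notin> ?G1)"
    using char_PP[OF G1, of D1] D1 unfolding Bfield_def by blast
  obtain a2 b2 where D2s: "D2 \<in> sets PP" and ab2: "AE x in PP. (x \<in> D2) = (a2 \<and> x \<in> ?G2 \<or> b2 \<and> x \<notin> ?G2)"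
    using char_PP[OF G2, of D2] D2 unfolding Bfield_def by blast
  have sp: "space PP \<in> sets PP" by (rule sets.top)
  have mG1: "measure PP ?G1 = 1/4" using L_B n by simp
  have mG2: "measure PP ?G2 = 1/4" using L_B n by simp
  have mG12: "measure PP (?G2 \<inter> ?G1) = 1/8" using L_BB[OF n] .
  have sG1: "?G1 \<inter> space PP = ?G1" "?G2 \<inter> space PP = ?G2" using Bset_sub by auto
  have c1: "(space PP - ?G1) \<inter> space PP = space PP - ?G1" "(space PP - ?G2) \<inter> space PP = space PP - ?G2" by auto
  have mc1: "measure PP (space PP - ?G1) = 3/4" using P.prob_compl[OF G1] mG1 by simp
  have mc2: "measure PP (space PP - ?G2) = 3/4" using P.prob_compl[OF G2] mG2 by simp
  have e11: "?G1 \<inter> ?G1 = ?G1" "(space PP - ?G1) \<inter> ?G1 = {}" by auto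
  have e21: "(space PP - ?G2) \<inter> ?G1 = ?G1 - (?G2 \<inter> ?G1)" using Bset_sub[of n] by auto
  have m21: "measure PP ((space PP - ?G2) \<inter> ?G1) = 1/4 - 1/8"
    unfolding e21 using P.finite_measure_Diff[OF G1, of "?G2 \<inter> ?G1"] G1 G2 mG1 mG12 by auto
  have v1: "measure PP (D1 \<inter> space PP) = (if a1 then 1 else 0) * (1/4) + (if b1 then 1 else 0) * (3/4)"
    using msplit[OF G1 sp D1s ab1] unfolding sG1 c1 mG1 mc1 .
  have v2: "measure PP (D1 \<inter> ?G1) = (if a1 then 1 else 0) * (1/4)"
    using msplit[OF G1 G1 D1s ab1] unfolding e11 mG1 by simp
  have v3: "measure PP (D2 \<inter> space PP) = (if a2 then 1 else 0) * (1/4) + (if b2 then 1 else 0) * (3/4)"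
    using msplit[OF G2 sp D2s ab2] unfolding sG1 c1 mG2 mc2 .
  have v4: "measure PP (D2 \<inter> ?G1) = (if a2 then 1 else 0) * (1/8) + (if b2 then 1 else 0) * (1/4 - 1/8)"
    using msplit[OF G2 G1 D2s ab2] unfolding mG12 m21 .
  have d12: "measure PP ((D1 - D2) \<union> (D2 - D1)) < 2 * \<epsilon>"
  proof -
    have "measure PP ((D1 - D2) \<union> (D2 - D1)) \<le> measure PP ((D1 - C) \<union> (C - D1)) + measure PP ((C - D2) \<union> (D2 - C))"
      by (rule dtri[OF D1s C D2s])
    moreover have "(D1 - C) \<union> (C - D1) = (C - D1) \<union> (D1 - C)" by blast
    ultimately show ?thesis using d1 d2 by simp
  qed
  have t1: "\<bar>measure PP (D1 \<inter> space PP) - measure PP (D2 \<inter> space PP)\<bar> < 2 * \<epsilon>"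
    using dtest[OF D1s D2s sp] d12 by linarith
  have t2: "\<bar>measure PP (D1 \<inter> ?G1) - measure PP (D2 \<inter> ?G1)\<bar> < 2 * \<epsilon>"
    using dtest[OF D1s D2s G1] d12 by linarith
  have t3: "\<bar>measure PP (C \<inter> space PP) - measure PP (D1 \<inter> space PP)\<bar> < \<epsilon>"
    using dtest[OF C D1s sp] d1 by linarith
  have ab: "a1 = b1"
  proof (rule ccontr)
    assume "a1 \<noteq> b1"
    then show False using t1 t2 eps unfolding v1 v2 v3 v4
      by (cases a1; cases b1; cases a2; cases b2) (simp_all add: abs_less_iff; linarith)+
  qed
  have Cs: "C \<inter> space PP = C" using C sets.sets_into_space by blast
  have mcC: "measure PP (space PP - C) = 1 - measure PP C" using P.prob_compl[OF C] .
  show ?thesis using t3 unfolding v1 Cs mcC using ab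
    by (cases a1) (auto simp: abs_less_iff)
qed


lemma sets_B0: "sets B0field = sigma_sets (space PP) (insert {} (null_sets PP))"
  unfolding B0_eq by (rule prob_space.sig_sets[OF prob_PP]) simp

lemma sets_Bn: "sets (Bfield n) = sigma_sets (space PP) (insert (Bset n) (null_sets PP))"
  unfolding Bfield_def by (rule prob_space.sig_sets[OF prob_PP Bset_sets])

lemma part2: "sets B0field = BP_field PP Bfield"
proof (rule set_eqI, rule iffI)
  fix C assume C: "C \<in> sets B0field"
  have G: "{} \<in> sets PP" by simp
  have Cs: "C \<in> sets PP" using char_PP[OF G, of C] C unfolding B0_eq by blast
  have "(INF D\<in>sets (Bfield n). measure PP ((C - D) \<union> (D - C))) = 0" for n
  proof (rule antisym)
    have "sigma_sets (space PP) (insert {} (null_sets PP)) \<subseteq> sigma_sets (space PP) (insert (Bset n) (null_sets PP))"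
      by (rule sigma_sets_mono') auto
    then have CF: "C \<in> sets (Bfield n)" using C unfolding sets_B0 sets_Bn by blast
    have bdd: "bdd_below ((\<lambda>D. measure PP ((C - D) \<union> (D - C))) ` sets (Bfield n))"
      by (rule bdd_belowI2[of _ 0]) simp
    show "(INF D\<in>sets (Bfield n). measure PP ((C - D) \<union> (D - C))) \<le> 0"
      using cINF_lower[OF bdd CF] by simp
    show "0 \<le> (INF D\<in>sets (Bfield n). measure PP ((C - D) \<union> (D - C)))"
      by (rule cINF_greatest) (use CF in auto)
  qed
  then show "C \<in> BP_field PP Bfield" unfolding BP_field_def using Cs by simp
next
  fix C assume "C \<in> BP_field PP Bfield"
  then have Cs: "C \<in> sets PP" and lim: "(\<lambda>n. INF D\<in>sets (Bfield n). measure PP ((C - D) \<union> (D - C))) \<longlonglongrightarrow> 0"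
    unfolding BP_field_def by auto
  have ex: "\<exists>D\<in>sets (Bfield n). measure PP ((C - D) \<union> (D - C)) < \<epsilon>"
    if "(INF D\<in>sets (Bfield n). measure PP ((C - D) \<union> (D - C))) < \<epsilon>" for n \<epsilon>
  proof -
    have bdd: "bdd_below ((\<lambda>D. measure PP ((C - D) \<union> (D - C))) ` sets (Bfield n))"
      by (rule bdd_belowI2[of _ 0]) simp
    have ne: "sets (Bfield n) \<noteq> {}" using sets.empty_sets by blast
    show ?thesis using that cINF_less_iff[OF ne bdd] by blast
  qed
  have claim: "measure PP C < \<epsilon> \<or> measure PP (space PP - C) < \<epsilon>" if e: "0 < \<epsilon>" "\<epsilon> \<le> 1/16" for \<epsilon>
  proof -
    have "eventually (\<lambda>n. (INF D\<in>sets (Bfield n). measure PP ((C - D) \<union> (D - C))) < \<epsilon>) sequentially"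
      by (rule order_tendstoD(2)[OF lim e(1)])
    then obtain N where N: "\<And>n. n \<ge> N \<Longrightarrow> (INF D\<in>sets (Bfield n). measure PP ((C - D) \<union> (D - C))) < \<epsilon>"
      unfolding eventually_sequentially by blast
    define n where "n = max N 2"
    have n2: "n \<ge> 2" unfolding n_def by simp
    obtain D1 where D1: "D1 \<in> sets (Bfield n)" "measure PP ((C - D1) \<union> (D1 - C)) < \<epsilon>"
    proof -
      have "n \<ge> N" unfolding n_def by simp
      from ex[OF N[OF this]] show ?thesis using that by blast
    qed
    obtain D2 where D2: "D2 \<in> sets (Bfield (Suc n))" "measure PP ((C - D2) \<union> (D2 - C)) < \<epsilon>"
    proof -
      have "Suc n \<ge> N" unfolding n_def by simp
      from ex[OF N[OF this]] show ?thesis using that by blast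
    qed
    show ?thesis by (rule key[OF n2 Cs e(2) D1(1) D2(1) D1(2) D2(2)])
  qed
  have "measure PP C = 0 \<or> measure PP (space PP - C) = 0"
  proof (rule ccontr)
    assume "\<not> ?thesis"
    then have p: "measure PP C > 0" "measure PP (space PP - C) > 0"
      using measure_nonneg[of PP C] measure_nonneg[of PP "space PP - C"] by linarith+
    define \<epsilon> where "\<epsilon> = min (1/16) (min (measure PP C) (measure PP (space PP - C)))"
    have "0 < \<epsilon>" "\<epsilon> \<le> 1/16" unfolding \<epsilon>_def using p by auto
    from claim[OF this] show False unfolding \<epsilon>_def by auto
  qed
  then show "C \<in> sets B0field"
  proof
    assume "measure PP C = 0"
    then have "C \<in> null_sets PP" using Cs by (simp add: P.emeasure_eq_measure null_setsI)
    then show ?thesis unfolding sets_B0 by (auto intro: sigma_sets.Basic)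
  next
    assume "measure PP (space PP - C) = 0"
    moreover have "space PP - C \<in> sets PP" by (rule sets.Diff[OF sets.top Cs])
    ultimately have "space PP - C \<in> null_sets PP" by (intro null_setsI) (simp_all only: P.emeasure_eq_measure, simp)
    then have "space PP - (space PP - C) \<in> sigma_sets (space PP) (insert {} (null_sets PP))"
      by (auto intro: sigma_sets.Basic sigma_sets.Compl)
    moreover have "space PP - (space PP - C) = C" using Cs sets.sets_into_space by blast
    ultimately show ?thesis unfolding sets_B0 by simp
  qed
qed

theorem mainTheorem2:
  shows "weak_conv PP Bfield B0field
    \<and> sets B0field = BP_field PP Bfield
    \<and> (\<forall>n\<ge>4. AE \<omega> in PP.
          real_cond_exp PP (Bfield n) (indicator (Aset \<inter> Bset')) \<omega>
        = real_cond_exp PP (Bfield n) (indicator Aset) \<omega> * real_cond_exp PP (Bfield n) (indicator Bset') \<omega>)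
    \<and> measure PP (Aset \<inter> Bset') \<noteq> measure PP Aset * measure PP Bset'
    \<and> \<not> (AE \<omega> in PP.
          real_cond_exp PP B0field (indicator (Aset \<inter> Bset')) \<omega>
        = real_cond_exp PP B0field (indicator Aset) \<omega> * real_cond_exp PP B0field (indicator Bset') \<omega>)"
  using part1 part2 part3 part4 part5 by blast


end
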